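(* Let $f_r(w,u)(x)=\sum_{l=1}^{n_1}w_{r,l}\big(\sum_{m=1}^d u_{lm}x_m\big)^{\alpha_l}$ with $\alpha\in\mathbb{R}^{n_1}$, $\alpha_l\ge1$, and let $\rho_x=\max_{i\in[n]}\|x^i\|_{p_u'}$. Then for every $x\in\{x^1,\dots,x^n\}$, every $(w,u)\in B_{++}$, all $r,s,q\in[K]$, $t,b'\in[n_1]$, $a'\in[n_1]$, $b''\in[d]$: $$\sum_{t}w_{s,t}\frac{\partial f_r(x)}{\partial w_{s,t}}\le C_w:=\rho_w\Psi^\alpha_{p_w',p_u}(\mathbf{1},\rho_u\rho_x),\qquad \sum_{a,b}u_{ab}\frac{\partial f_r(x)}{\partial u_{ab}}\le C_u:=\rho_w\Psi^\alpha_{p_w',p_u}(\alpha,\rho_u\rho_x),$$ $$\sum_t w_{s,t}\frac{\partial^2 f_r(x)}{\partial w_{s,t}\partial w_{q,b'}}=0,\qquad \sum_{a,b}u_{ab}\frac{\partial^2 f_r(x)}{\partial u_{ab}\partial w_{q,b'}}\le\|\alpha\|_\infty\frac{\partial f_r(x)}{\partial w_{q,b'}},$$ $$\sum_t w_{s,t}\frac{\partial^2 f_r(x)}{\partial w_{s,t}\partial u_{a'b''}}\le\frac{\partial f_r(x)}{\partial u_{a'b''}},\qquad \sum_{a,b}u_{ab}\frac{\partial^2 f_r(x)}{\partial u_{ab}\partial u_{a'b''}}\le(\|\alpha\|_\infty-1)\frac{\partial f_r(x)}{\partial u_{a'b''}}.$$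
   Context: Data $x^i\in\mathbb{R}^d_+$, $i\in[n]$. $w\in\mathbb{R}^{K\times n_1}$ with rows $w_1,\dots,w_K$, $u\in\mathbb{R}^{n_1\times d}$. Given $p_w,p_u\in(1,\infty)$, $\rho_w,\rho_u>0$, $B_{++}=\{(w,u)\in\mathbb{R}^{K\times n_1}_{++}\times\mathbb{R}^{n_1\times d}_{++}:\|u\|_{p_u}\le\rho_u,\ \|w_i\|_{p_w}\le\rho_w\ \forall i\}$ (entrywise norms); $p'=p/(p-1)$. $\mathbf{1}$ is the all-ones vector in $\mathbb{R}^{n_1}$. For $p,q\ge1$ and $\alpha\in\mathbb{R}^{n_1}_{++}$, $$\Psi^{\alpha}_{p,q}(\delta,t)=\Big(\Big[\sum_{l\in J}(\delta_l t^{\alpha_l})^{\frac{pq}{q-\bar\alpha p}}\Big]^{1-\frac{\bar\alpha p}{q}}+\max_{j\in J^c}(\delta_j t^{\alpha_j})^p\Big)^{1/p},\quad \delta\in\mathbb{R}^{n_1}_{++},\ t>0,$$ with $J=\{l:\alpha_lp<q\}$, $J^c=\{l:\alpha_lp\ge q\}$, $\bar\alpha=\min_{l\in J}\alpha_l$, empty sums/maxima equal to $0$. *)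

theory Defs
  imports "HOL-Analysis.Analysis"
begin

text \<open>Matrices are represented as functions nat => nat => real; only the
entries with indices in the relevant ranges matter.\<close>

definition conj_exp :: "real \<Rightarrow> real" where
  "conj_exp p = p / (p - 1)"

definition lpnorm :: "nat \<Rightarrow> real \<Rightarrow> (nat \<Rightarrow> real) \<Rightarrow> real" where
  "lpnorm d p v = (\<Sum>m<d. \<bar>v m\<bar> powr p) powr (1 / p)"

definition lpnorm_mat :: "nat \<Rightarrow> nat \<Rightarrow> real \<Rightarrow> (nat \<Rightarrow> nat \<Rightarrow> real) \<Rightarrow> real" where
  "lpnorm_mat k d p u = (\<Sum>l<k. \<Sum>m<d. \<bar>u l m\<bar> powr p) powr (1 / p)"

definition Bpp :: "nat \<Rightarrow> nat \<Rightarrow> nat \<Rightarrow> real \<Rightarrow> real \<Rightarrow> real \<Rightarrow> real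
   \<Rightarrow> ((nat \<Rightarrow> nat \<Rightarrow> real) \<times> (nat \<Rightarrow> nat \<Rightarrow> real)) set" where
  "Bpp K n1 d pw pu rhow rhou =
     {(w, u). (\<forall>i<K. \<forall>l<n1. w i l > 0) \<and> (\<forall>l<n1. \<forall>m<d. u l m > 0) \<and>
              lpnorm_mat n1 d pu u \<le> rhou \<and> (\<forall>i<K. lpnorm n1 pw (w i) \<le> rhow)}"

definition Psi :: "nat \<Rightarrow> (nat \<Rightarrow> real) \<Rightarrow> real \<Rightarrow> real \<Rightarrow> (nat \<Rightarrow> real) \<Rightarrow> real \<Rightarrow> real" where
  "Psi n1 alpha p q delta t =
     (let J = {l\<in>{..<n1}. alpha l * p < q};
          Jc = {l\<in>{..<n1}. alpha l * p \<ge> q};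
          ab = Min (alpha ` J)
      in ((if J = {} then 0 else
             (\<Sum>l\<in>J. (delta l * t powr alpha l) powr (p * q / (q - ab * p))) powr (1 - ab * p / q))
          + (if Jc = {} then 0 else Max ((\<lambda>j. (delta j * t powr alpha j) powr p) ` Jc)))
         powr (1 / p))"

definition fnet :: "nat \<Rightarrow> nat \<Rightarrow> (nat \<Rightarrow> real) \<Rightarrow> (nat \<Rightarrow> real) \<Rightarrow> nat
   \<Rightarrow> (nat \<Rightarrow> nat \<Rightarrow> real) \<Rightarrow> (nat \<Rightarrow> nat \<Rightarrow> real) \<Rightarrow> real" where
  "fnet n1 d alpha x r w u = (\<Sum>l<n1. w r l * (\<Sum>m<d. u l m * x m) powr alpha l)"

definition pdw :: "((nat \<Rightarrow> nat \<Rightarrow> real) \<Rightarrow> (nat \<Rightarrow> nat \<Rightarrow> real) \<Rightarrow> real)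
   \<Rightarrow> nat \<Rightarrow> nat \<Rightarrow> (nat \<Rightarrow> nat \<Rightarrow> real) \<Rightarrow> (nat \<Rightarrow> nat \<Rightarrow> real) \<Rightarrow> real" where
  "pdw F s t w u = deriv (\<lambda>h. F (w(s := (w s)(t := w s t + h))) u) 0"

definition pdu :: "((nat \<Rightarrow> nat \<Rightarrow> real) \<Rightarrow> (nat \<Rightarrow> nat \<Rightarrow> real) \<Rightarrow> real)
   \<Rightarrow> nat \<Rightarrow> nat \<Rightarrow> (nat \<Rightarrow> nat \<Rightarrow> real) \<Rightarrow> (nat \<Rightarrow> nat \<Rightarrow> real) \<Rightarrow> real" where
  "pdu F a b w u = deriv (\<lambda>h. F w (u(a := (u a)(b := u a b + h)))) 0"

end

theory Submission
  imports Defs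
begin



definition zz :: "nat \<Rightarrow> (nat \<Rightarrow> real) \<Rightarrow> (nat \<Rightarrow> nat \<Rightarrow> real) \<Rightarrow> nat \<Rightarrow> real" where
  "zz d x u l = (\<Sum>m<d. u l m * x m)"

lemma fun_upd_plus: "(f(b := f b + h)) m = f m + (if m = b then h else (0::real))"
  by auto

lemma zz_upd:
  assumes "b < d"
  shows "zz d x (u(a := (u a)(b := u a b + h))) l = zz d x u l + (if l = a then h * x b else 0)"
proof (cases "l = a")
  case True
  have "zz d x (u(a := (u a)(b := u a b + h))) l = (\<Sum>m<d. u a m * x m + (if m = b then h * x b else 0))"
    unfolding zz_def using True by (intro sum.cong) (auto simp: algebra_simps)
  also have "\<dots> = zz d x u l + h * x b"
    using assms True by (simp add: sum.distrib zz_def)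
  finally show ?thesis using True by simp
qed (simp add: zz_def)

lemma fnet_zz: "fnet n1 d alpha x r w u = (\<Sum>l<n1. w r l * zz d x u l powr alpha l)"
  by (simp add: fnet_def zz_def)

lemma fnet_updw:
  assumes "t < n1"
  shows "fnet n1 d alpha x r (w(s := (w s)(t := w s t + h))) u
       = fnet n1 d alpha x r w u + (if s = r then h * zz d x u t powr alpha t else 0)"
proof (cases "s = r")
  case True
  have "fnet n1 d alpha x r (w(s := (w s)(t := w s t + h))) u
      = (\<Sum>l<n1. w r l * zz d x u l powr alpha l + (if l = t then h * zz d x u t powr alpha t else 0))"
    unfolding fnet_zz using True by (intro sum.cong) (auto simp: algebra_simps)
  also have "\<dots> = fnet n1 d alpha x r w u + h * zz d x u t powr alpha t"
    using assms by (simp add: sum.distrib fnet_zz)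
  finally show ?thesis using True by simp
qed (simp add: fnet_def)

lemma fnet_updu:
  assumes "a < n1" "b < d"
  shows "fnet n1 d alpha x r w (u(a := (u a)(b := u a b + h)))
       = w r a * (zz d x u a + h * x b) powr alpha a + (fnet n1 d alpha x r w u - w r a * zz d x u a powr alpha a)"
proof -
  have "fnet n1 d alpha x r w (u(a := (u a)(b := u a b + h)))
      = (\<Sum>l<n1. w r l * zz d x u l powr alpha l + (if l = a then w r a * (zz d x u a + h * x b) powr alpha a - w r a * zz d x u a powr alpha a else 0))"
    unfolding fnet_zz using assms by (intro sum.cong) (auto simp: zz_upd)
  also have "\<dots> = fnet n1 d alpha x r w u + (w r a * (zz d x u a + h * x b) powr alpha a - w r a * zz d x u a powr alpha a)"
    using assms by (simp add: sum.distrib fnet_zz)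
  finally show ?thesis by simp
qed

lemma deriv_lin: "deriv (\<lambda>h. A + h * k) 0 = (k::real)"
  by (rule DERIV_imp_deriv) (auto intro!: derivative_eq_intros)

lemma has_deriv_aff_powr:
  assumes "c > 0"
  shows "((\<lambda>h. A * (c + h * k) powr e + B) has_real_derivative A * (e * c powr (e - 1) * k)) (at 0)"
proof -
  have d1: "((\<lambda>z. z powr e) has_real_derivative e * (c + 0 * k) powr (e - 1)) (at (c + 0 * k))"
    using has_real_derivative_powr[of "c + 0 * k" e] assms by simp
  have d2: "((\<lambda>h. c + h * k) has_real_derivative k) (at 0)"
    by (auto intro!: derivative_eq_intros)
  have d3: "((\<lambda>h. (c + h * k) powr e) has_real_derivative e * (c + 0 * k) powr (e - 1) * k) (at 0)"
    using DERIV_chain2[OF d1 d2] by simp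
  show ?thesis
    using DERIV_add[OF DERIV_cmult[OF d3, of A] DERIV_const[of B]] by (simp add: mult.assoc)
qed

lemma deriv_aff_powr:
  assumes "(c::real) > 0"
  shows "deriv (\<lambda>h. A * (c + h * k) powr e + B) 0 = A * (e * c powr (e - 1) * k)"
  using has_deriv_aff_powr[OF assms] by (rule DERIV_imp_deriv)




lemma holder_sum:
  fixes a b :: "'i \<Rightarrow> real"
  assumes fin: "finite I" and p: "p > 1" and q: "q > 1" and pq: "1/p + 1/q = 1"
    and a: "\<And>i. i \<in> I \<Longrightarrow> a i \<ge> 0" and b: "\<And>i. i \<in> I \<Longrightarrow> b i \<ge> 0"
  shows "(\<Sum>i\<in>I. a i * b i) \<le> (\<Sum>i\<in>I. a i powr p) powr (1/p) * (\<Sum>i\<in>I. b i powr q) powr (1/q)"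
proof -
  define A where "A = (\<Sum>i\<in>I. a i powr p)"
  define B where "B = (\<Sum>i\<in>I. b i powr q)"
  have A0: "A \<ge> 0" and B0: "B \<ge> 0" unfolding A_def B_def by (auto intro: sum_nonneg)
  show ?thesis
  proof (cases "A = 0 \<or> B = 0")
    case True
    then have "\<forall>i\<in>I. a i * b i = 0"
    proof
      assume "A = 0"
      then have "\<forall>i\<in>I. a i powr p = 0" using sum_nonneg_eq_0_iff[OF fin, of "\<lambda>i. a i powr p"] A_def by simp
      then show ?thesis by auto
    next
      assume "B = 0"
      then have "\<forall>i\<in>I. b i powr q = 0" using sum_nonneg_eq_0_iff[OF fin, of "\<lambda>i. b i powr q"] B_def by simp
      then show ?thesis by auto
    qed
    then have "(\<Sum>i\<in>I. a i * b i) = 0" by (intro sum.neutral) blast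
    then show ?thesis by (simp add: A_def[symmetric] B_def[symmetric])
  next
    case False
    then have Ap: "A > 0" and Bp: "B > 0" using A0 B0 by auto
    define al where "al = A powr (1/p)"
    define be where "be = B powr (1/q)"
    have alp: "al > 0" and bep: "be > 0" using Ap Bp by (auto simp: al_def be_def)
    have alpow: "al powr p = A" using Ap p by (simp add: al_def powr_powr)
    have bepow: "be powr q = B" using Bp q by (simp add: be_def powr_powr)
    have each: "(a i / al) * (b i / be) \<le> a i powr p / (p * A) + b i powr q / (q * B)" if "i \<in> I" for i
    proof -
      have "(a i / al) * (b i / be) \<le> (a i / al) powr p / p + (b i / be) powr q / q"
        using Youngs_inequality[OF p q pq, of "a i / al" "b i / be"] a[OF that] b[OF that] alp bep by simp
      also have "\<dots> = a i powr p / (p * A) + b i powr q / (q * B)"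
        using alpow bepow a[OF that] b[OF that] alp bep by (simp add: powr_divide mult.commute)
      finally show ?thesis .
    qed
    have "(\<Sum>i\<in>I. (a i / al) * (b i / be)) \<le> (\<Sum>i\<in>I. a i powr p / (p * A) + b i powr q / (q * B))"
      using each by (rule sum_mono)
    also have "\<dots> = A / (p * A) + B / (q * B)"
      by (simp add: sum.distrib A_def B_def sum_divide_distrib)
    also have "\<dots> = 1" using Ap Bp pq by simp
    finally have "(\<Sum>i\<in>I. a i * b i) / (al * be) \<le> 1"
      by (simp add: sum_divide_distrib)
    then show ?thesis using alp bep by (simp add: A_def[symmetric] B_def[symmetric] al_def[symmetric] be_def[symmetric])
  qed
qed




lemma psi_core:
  fixes n1 :: nat and alpha delta y :: "nat \<Rightarrow> real" and p q t :: real
  assumes p: "p > 1" and q: "q > 1" and t: "t \<ge> 0"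
    and dl: "\<And>l. l < n1 \<Longrightarrow> delta l > 0"
    and al: "\<And>l. l < n1 \<Longrightarrow> alpha l \<ge> 1"
    and y0: "\<And>l. l < n1 \<Longrightarrow> y l \<ge> 0" and y1: "\<And>l. l < n1 \<Longrightarrow> y l \<le> 1"
    and ys: "(\<Sum>l<n1. y l powr q) \<le> 1"
  defines "J \<equiv> {l\<in>{..<n1}. alpha l * p < q}"
    and "Jc \<equiv> {l\<in>{..<n1}. alpha l * p \<ge> q}"
  defines "ab \<equiv> Min (alpha ` J)"
  shows "(\<Sum>l<n1. (delta l * t powr alpha l) powr p * y l powr (alpha l * p))
     \<le> (if J = {} then 0 else
             (\<Sum>l\<in>J. (delta l * t powr alpha l) powr (p * q / (q - ab * p))) powr (1 - ab * p / q))
          + (if Jc = {} then 0 else Max ((\<lambda>j. (delta j * t powr alpha j) powr p) ` Jc))"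
proof -
  define e where "e l = (delta l * t powr alpha l) powr p" for l
  have e0: "e l \<ge> 0" for l by (simp add: e_def)
  have finJ: "finite J" and finJc: "finite Jc" by (auto simp: J_def Jc_def)
  have union: "{..<n1} = J \<union> Jc" and disj: "J \<inter> Jc = {}" by (auto simp: J_def Jc_def)
  have split: "(\<Sum>l<n1. e l * y l powr (alpha l * p)) = (\<Sum>l\<in>J. e l * y l powr (alpha l * p)) + (\<Sum>l\<in>Jc. e l * y l powr (alpha l * p))"
    by (subst union) (rule sum.union_disjoint[OF finJ finJc disj])
  have ysub: "(\<Sum>l\<in>K. y l powr q) \<le> 1" if "K \<subseteq> {..<n1}" for K
  proof -
    have "(\<Sum>l\<in>K. y l powr q) \<le> (\<Sum>l<n1. y l powr q)"
      by (rule sum_mono2) (use that in auto)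
    then show ?thesis using ys by simp
  qed
  have partc: "(\<Sum>l\<in>Jc. e l * y l powr (alpha l * p)) \<le> (if Jc = {} then 0 else Max (e ` Jc))"
  proof (cases "Jc = {}")
    case False
    define M where "M = Max (e ` Jc)"
    have M0: "M \<ge> 0" using False finJc e0 by (auto simp: M_def Max_ge_iff)
    have "(\<Sum>l\<in>Jc. e l * y l powr (alpha l * p)) \<le> (\<Sum>l\<in>Jc. M * y l powr q)"
    proof (rule sum_mono)
      fix l assume l: "l \<in> Jc"
      then have ln: "l < n1" and lq: "alpha l * p \<ge> q" by (auto simp: Jc_def)
      have "y l powr (alpha l * p) \<le> y l powr q"
        using powr_mono'[OF lq y0[OF ln] y1[OF ln]] .
      moreover have "e l \<le> M" using l finJc by (simp add: M_def)
      ultimately show "e l * y l powr (alpha l * p) \<le> M * y l powr q"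
        using e0 M0 by (simp add: mult_mono)
    qed
    also have "\<dots> = M * (\<Sum>l\<in>Jc. y l powr q)" by (simp add: sum_distrib_left)
    also have "\<dots> \<le> M * 1" using ysub[of Jc] M0 by (intro mult_left_mono) (auto simp: Jc_def)
    finally show ?thesis using False by (simp add: M_def)
  qed (simp)
  have partJ: "(\<Sum>l\<in>J. e l * y l powr (alpha l * p)) \<le> (if J = {} then 0 else
             (\<Sum>l\<in>J. (delta l * t powr alpha l) powr (p * q / (q - ab * p))) powr (1 - ab * p / q))"
  proof (cases "J = {}")
    case False
    have abJ: "ab \<in> alpha ` J" using False finJ by (simp add: ab_def)
    then obtain l0 where l0: "l0 \<in> J" "ab = alpha l0" by auto
    have ab1: "ab \<ge> 1" using l0 al by (auto simp: J_def)
    have abq: "ab * p < q" using l0 by (auto simp: J_def)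
    define th where "th = ab * p / q"
    have th0: "th > 0" using ab1 p q by (simp add: th_def)
    have th1: "th < 1" using abq q by (simp add: th_def)
    define P where "P = 1 / (1 - th)"
    define Q where "Q = 1 / th"
    have P1: "P > 1" using th0 th1 by (simp add: P_def)
    have Q1: "Q > 1" using th0 th1 by (simp add: Q_def)
    have PQ: "1/P + 1/Q = 1" by (simp add: P_def Q_def)
    have "(\<Sum>l\<in>J. e l * y l powr (alpha l * p)) \<le> (\<Sum>l\<in>J. e l * (y l powr q) powr th)"
    proof (rule sum_mono)
      fix l assume l: "l \<in> J"
      then have ln: "l < n1" by (auto simp: J_def)
      have "ab \<le> alpha l" using l finJ by (simp add: ab_def)
      then have "ab * p \<le> alpha l * p" using p by (simp add: mult_right_mono)
      then have "y l powr (alpha l * p) \<le> y l powr (ab * p)"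
        using powr_mono' y0[OF ln] y1[OF ln] by blast
      also have "y l powr (ab * p) = (y l powr q) powr th"
        using q by (simp add: powr_powr th_def)
      finally show "e l * y l powr (alpha l * p) \<le> e l * (y l powr q) powr th"
        using e0 by (simp add: mult_left_mono)
    qed
    also have "\<dots> \<le> (\<Sum>l\<in>J. e l powr P) powr (1/P) * (\<Sum>l\<in>J. ((y l powr q) powr th) powr Q) powr (1/Q)"
      by (rule holder_sum[OF finJ P1 Q1 PQ]) (auto simp: e0)
    also have "(\<Sum>l\<in>J. ((y l powr q) powr th) powr Q) = (\<Sum>l\<in>J. y l powr q)"
      using th0 by (simp add: powr_powr Q_def)
    also have "(\<Sum>l\<in>J. e l powr P) powr (1/P) * (\<Sum>l\<in>J. y l powr q) powr (1/Q) \<le> (\<Sum>l\<in>J. e l powr P) powr (1/P) * 1"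
    proof (rule mult_left_mono)
      have "(\<Sum>l\<in>J. y l powr q) \<ge> 0" by (intro sum_nonneg) simp
      moreover have "(\<Sum>l\<in>J. y l powr q) \<le> 1" using ysub[of J] by (auto simp: J_def)
      ultimately show "(\<Sum>l\<in>J. y l powr q) powr (1/Q) \<le> 1" using th0 by (intro powr_le1) (auto simp: Q_def)
    qed simp
    also have "(\<Sum>l\<in>J. e l powr P) = (\<Sum>l\<in>J. (delta l * t powr alpha l) powr (p * q / (q - ab * p)))"
    proof (rule sum.cong)
      fix l assume "l \<in> J"
      have "p * P = p * q / (q - ab * p)" using q abq by (simp add: P_def th_def field_simps)
      then show "e l powr P = (delta l * t powr alpha l) powr (p * q / (q - ab * p))"
        by (simp add: e_def powr_powr)
    qed simp
    also have "1/P = 1 - ab * p / q" by (simp add: P_def th_def)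
    finally show ?thesis using False by simp
  qed simp
  have "(\<Sum>l<n1. (delta l * t powr alpha l) powr p * y l powr (alpha l * p)) = (\<Sum>l<n1. e l * y l powr (alpha l * p))"
    by (simp add: e_def)
  also have "\<dots> \<le> (if J = {} then 0 else
             (\<Sum>l\<in>J. (delta l * t powr alpha l) powr (p * q / (q - ab * p))) powr (1 - ab * p / q))
          + (if Jc = {} then 0 else Max (e ` Jc))" using split partJ partc by linarith
  also have "e = (\<lambda>j. (delta j * t powr alpha j) powr p)" by (rule ext) (simp add: e_def)
  finally show ?thesis .
qed




lemma conj_exp_facts:
  assumes "p > (1::real)"
  shows "conj_exp p > 1" "1/p + 1/conj_exp p = 1"
  using assms by (auto simp: conj_exp_def field_simps)

lemma main_bound:
  fixes n1 d :: nat and w u :: "nat \<Rightarrow> nat \<Rightarrow> real" and x alpha delta :: "nat \<Rightarrow> real"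
  assumes pw: "pw > 1" and q: "q > 1" and rhou: "rhou > 0" and rhox: "rhox \<ge> 0"
    and wpos: "\<And>l. l < n1 \<Longrightarrow> w r l > 0" and wnorm: "lpnorm n1 pw (w r) \<le> rhow"
    and upos: "\<And>l m. l < n1 \<Longrightarrow> m < d \<Longrightarrow> u l m > 0" and unorm: "lpnorm_mat n1 d q u \<le> rhou"
    and xnn: "\<And>m. m < d \<Longrightarrow> x m \<ge> 0" and xnorm: "lpnorm d (conj_exp q) x \<le> rhox"
    and dl: "\<And>l. l < n1 \<Longrightarrow> delta l > 0"
    and al: "\<And>l. l < n1 \<Longrightarrow> alpha l \<ge> 1"
  shows "(\<Sum>l<n1. w r l * (delta l * zz d x u l powr alpha l))
         \<le> rhow * Psi n1 alpha (conj_exp pw) q delta (rhou * rhox)"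
proof -
  define p where "p = conj_exp pw"
  have p1: "p > 1" and ppw: "1/pw + 1/p = 1" using conj_exp_facts[OF pw] by (auto simp: p_def)
  have q'1: "conj_exp q > 1" and qq': "1/q + 1/conj_exp q = 1" using conj_exp_facts[OF q] by auto
  define c where "c l = delta l * zz d x u l powr alpha l" for l
  have c0: "c l \<ge> 0" if "l < n1" for l using dl[OF that] by (simp add: c_def)
  have S1: "(\<Sum>l<n1. w r l * c l) \<le> (\<Sum>l<n1. w r l powr pw) powr (1/pw) * (\<Sum>l<n1. c l powr p) powr (1/p)"
    by (rule holder_sum[OF _ pw p1 ppw]) (auto intro: c0 less_imp_le[OF wpos])
  have wn: "(\<Sum>l<n1. w r l powr pw) powr (1/pw) \<le> rhow"
  proof -
    have "(\<Sum>l<n1. w r l powr pw) = (\<Sum>l<n1. \<bar>w r l\<bar> powr pw)"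
      by (rule sum.cong) (auto dest: wpos)
    then show ?thesis using wnorm by (simp add: lpnorm_def)
  qed
  define v where "v l = (\<Sum>m<d. u l m powr q) powr (1/q)" for l
  have v0: "v l \<ge> 0" for l by (simp add: v_def)
  define y where "y l = v l / rhou" for l
  have y0: "y l \<ge> 0" for l using v0 rhou by (simp add: y_def)
  have zzv: "zz d x u l \<le> v l * rhox" if l: "l < n1" for l
  proof -
    have "zz d x u l \<le> (\<Sum>m<d. u l m powr q) powr (1/q) * (\<Sum>m<d. x m powr conj_exp q) powr (1/conj_exp q)"
      unfolding zz_def by (rule holder_sum[OF _ q q'1 qq']) (auto intro: xnn less_imp_le[OF upos[OF l]])
    also have "(\<Sum>m<d. x m powr conj_exp q) = (\<Sum>m<d. \<bar>x m\<bar> powr conj_exp q)"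
      by (rule sum.cong) (auto dest: xnn)
    also have "(\<Sum>m<d. \<bar>x m\<bar> powr conj_exp q) powr (1/conj_exp q) = lpnorm d (conj_exp q) x"
      by (simp add: lpnorm_def)
    finally show ?thesis using xnorm v0[of l] unfolding v_def by (meson mult_left_mono order_trans)
  qed
  have zz0: "zz d x u l \<ge> 0" if l: "l < n1" for l
    unfolding zz_def using upos[OF l] xnn by (intro sum_nonneg) (simp add: less_imp_le)
  have yq: "y l powr q = (\<Sum>m<d. u l m powr q) / rhou powr q" for l
  proof -
    have "v l powr q = (\<Sum>m<d. u l m powr q)"
      unfolding v_def using q by (simp add: powr_powr sum_nonneg)
    then show ?thesis by (simp add: y_def powr_divide v0 rhou)
  qed
  have ys: "(\<Sum>l<n1. y l powr q) \<le> 1"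
  proof -
    define T where "T = (\<Sum>l<n1. \<Sum>m<d. u l m powr q)"
    have T0: "T \<ge> 0" unfolding T_def by (auto intro!: sum_nonneg)
    have "(\<Sum>l<n1. \<Sum>m<d. \<bar>u l m\<bar> powr q) = T" unfolding T_def
      by (intro sum.cong refl) (auto dest: upos)
    then have "T powr (1/q) \<le> rhou" using unorm by (simp add: lpnorm_mat_def)
    then have "(T powr (1/q)) powr q \<le> rhou powr q" using q T0 by (intro powr_mono2) auto
    then have "T \<le> rhou powr q" using q T0 by (simp add: powr_powr)
    moreover have "(\<Sum>l<n1. y l powr q) = T / rhou powr q" by (simp add: yq T_def sum_divide_distrib)
    ultimately show ?thesis using rhou by simp
  qed
  have y1: "y l \<le> 1" if "l < n1" for l
  proof (rule ccontr)
    assume "\<not> y l \<le> 1"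
    then have "y l > 1" by simp
    then have "y l powr q > 1" using q powr_less_mono2[of q 1 "y l"] by simp
    moreover have "y l powr q \<le> (\<Sum>l<n1. y l powr q)"
      using that by (intro member_le_sum) auto
    ultimately show False using ys by simp
  qed
  define t where "t = rhou * rhox"
  have t0: "t \<ge> 0" using rhou rhox by (simp add: t_def)
  have cp: "c l powr p \<le> (delta l * t powr alpha l) powr p * y l powr (alpha l * p)" if l: "l < n1" for l
  proof -
    have "zz d x u l \<le> t * y l" using zzv[OF l] rhou by (simp add: t_def y_def mult.commute)
    then have "zz d x u l powr alpha l \<le> (t * y l) powr alpha l"
      using al[OF l] zz0[OF l] by (intro powr_mono2) auto
    then have "c l \<le> delta l * (t powr alpha l * y l powr alpha l)"
      using dl[OF l] t0 y0 by (simp add: c_def powr_mult)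
    then have "c l powr p \<le> (delta l * (t powr alpha l * y l powr alpha l)) powr p"
      using c0[OF l] p1 by (intro powr_mono2) auto
    also have "\<dots> = (delta l * t powr alpha l) powr p * y l powr (alpha l * p)"
      using dl[OF l] t0 y0 by (simp add: powr_mult powr_powr mult.assoc)
    finally show ?thesis .
  qed
  have core: "(\<Sum>l<n1. c l powr p) \<le> (\<Sum>l<n1. (delta l * t powr alpha l) powr p * y l powr (alpha l * p))"
    by (rule sum_mono) (rule cp, simp)
  have "(\<Sum>l<n1. c l powr p) powr (1/p) \<le> Psi n1 alpha p q delta t"
    unfolding Psi_def Let_def using p1
    by (intro powr_mono2 order_trans[OF core psi_core[OF p1 q t0 dl al y0 y1 ys]]) (auto intro: sum_nonneg)
  then have "(\<Sum>l<n1. w r l * c l) \<le> rhow * Psi n1 alpha p q delta t"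
    using S1 wn by (meson mult_mono order_trans powr_ge_zero)
  then show ?thesis by (simp add: c_def p_def t_def)
qed




lemma deriv_const0: "deriv (\<lambda>h::real. c::real) 0 = 0"
  by (rule DERIV_imp_deriv) (rule DERIV_const)

lemma deriv_on_open:
  assumes "open S" "0 \<in> S" "\<And>h. h \<in> S \<Longrightarrow> g h = f h" "(f has_real_derivative D) (at 0)"
  shows "deriv g 0 = D"
  by (rule DERIV_imp_deriv, rule has_field_derivative_transform_within_open[OF assms(4) assms(1,2)])
     (simp add: assms(3))

lemma zz_pos:
  assumes "\<And>m. m < d \<Longrightarrow> u l m > 0" "\<And>m. m < d \<Longrightarrow> x m \<ge> 0" "m0 < d" "x m0 > 0"
  shows "zz d x u l > 0"
  unfolding zz_def
  by (rule sum_pos2[of "{..<d}" m0]) (use assms in \<open>auto intro: mult_nonneg_nonneg less_imp_le\<close>)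

lemma pdwF:
  assumes "t < n1"
  shows "pdw (fnet n1 d alpha x r) s t w u = (if s = r then zz d x u t powr alpha t else 0)"
proof -
  have "(\<lambda>h. fnet n1 d alpha x r (w(s := (w s)(t := w s t + h))) u)
      = (\<lambda>h. fnet n1 d alpha x r w u + h * (if s = r then zz d x u t powr alpha t else 0))"
    using assms by (auto simp: fnet_updw)
  then show ?thesis unfolding pdw_def by (simp add: deriv_lin)
qed

lemma pduF:
  assumes "a < n1" "b < d" "zz d x u a > 0"
  shows "pdu (fnet n1 d alpha x r) a b w u = w r a * (alpha a * zz d x u a powr (alpha a - 1) * x b)"
  unfolding pdu_def using assms by (simp add: fnet_updu deriv_aff_powr)




lemma pdw_pdwF:
  assumes "b' < n1" "t < n1"
  shows "pdw (pdw (fnet n1 d alpha x r) q b') s t w u = 0"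
  using assms by (simp add: pdw_def[of "pdw (fnet n1 d alpha x r) q b'"] pdwF deriv_const0)

lemma pdu_pdwF:
  assumes "a < n1" "b < d" "b' < n1" "zz d x u b' > 0"
  shows "pdu (pdw (fnet n1 d alpha x r) q b') a b w u
       = (if q = r \<and> a = b' then alpha b' * zz d x u b' powr (alpha b' - 1) * x b else 0)"
proof -
  have e: "pdu (pdw (fnet n1 d alpha x r) q b') a b w u
     = deriv (\<lambda>h. if q = r then (zz d x u b' + (if b' = a then h * x b else 0)) powr alpha b' else 0) 0"
  proof -
    have z: "\<And>h. zz d x (u(a := (u a)(b := u a b + h))) b' = zz d x u b' + (if b' = a then h * x b else 0)"
      using zz_upd[OF assms(2)] by simp
    show ?thesis using assms by (simp add: pdu_def[of "pdw (fnet n1 d alpha x r) q b'"] pdwF z cong: if_cong)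
  qed
  show ?thesis
  proof (cases "q = r \<and> a = b'")
    case True
    then have "(\<lambda>h. if q = r then (zz d x u b' + (if b' = a then h * x b else 0)) powr alpha b' else 0)
       = (\<lambda>h. 1 * (zz d x u b' + h * x b) powr alpha b' + 0)" by auto
    then show ?thesis using e True assms deriv_aff_powr[of "zz d x u b'" 1 "x b" "alpha b'" 0] by simp
  next
    case False
    then have "(\<lambda>h. if q = r then (zz d x u b' + (if b' = a then h * x b else 0)) powr alpha b' else 0)
       = (\<lambda>h. if q = r then zz d x u b' powr alpha b' else 0)" by auto
    then show ?thesis unfolding if_not_P[OF False] using e by (simp add: deriv_const0)
  qed
qed

lemma pdw_pduF:
  assumes "a' < n1" "b'' < d" "t < n1" "zz d x u a' > 0"
  shows "pdw (pdu (fnet n1 d alpha x r) a' b'') s t w u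
       = (if s = r \<and> t = a' then alpha a' * zz d x u a' powr (alpha a' - 1) * x b'' else 0)"
proof -
  define K where "K = alpha a' * zz d x u a' powr (alpha a' - 1) * x b''"
  have "(\<lambda>h. pdu (fnet n1 d alpha x r) a' b'' (w(s := (w s)(t := w s t + h))) u)
      = (\<lambda>h. w r a' * K + h * (if s = r \<and> t = a' then K else 0))"
    using assms by (auto simp: pduF K_def algebra_simps)
  then have e: "pdw (pdu (fnet n1 d alpha x r) a' b'') s t w u = deriv (\<lambda>h. w r a' * K + h * (if s = r \<and> t = a' then K else 0)) 0"
    by (simp add: pdw_def[of "pdu (fnet n1 d alpha x r) a' b''"])
  then show ?thesis using e by (simp add: deriv_lin K_def)
qed

lemma pdu_pduF:
  assumes "a < n1" "b < d" "a' < n1" "b'' < d"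
    and upos: "\<And>l m. l < n1 \<Longrightarrow> m < d \<Longrightarrow> u l m > 0"
    and xnn: "\<And>m. m < d \<Longrightarrow> x m \<ge> 0" and m0: "m0 < d" "x m0 > 0"
  shows "pdu (pdu (fnet n1 d alpha x r) a' b'') a b w u
       = (if a = a' then w r a' * alpha a' * x b'' * ((alpha a' - 1) * zz d x u a' powr (alpha a' - 1 - 1) * x b) else 0)"
proof -
  define S where "S = {- u a b <..}"
  have S: "open S" "0 \<in> S" using upos[OF assms(1,2)] by (auto simp: S_def)
  define Z where "Z = zz d x u a'"
  have Zp: "Z > 0" unfolding Z_def using zz_pos[of d u a' x m0] upos[OF assms(3)] xnn m0 by blast
  have eq: "pdu (fnet n1 d alpha x r) a' b'' w (u(a := (u a)(b := u a b + h)))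
      = w r a' * (alpha a' * (Z + (if a' = a then h * x b else 0)) powr (alpha a' - 1) * x b'')"
    if h: "h \<in> S" for h
  proof -
    have "\<And>m. m < d \<Longrightarrow> (u(a := (u a)(b := u a b + h))) a' m > 0"
      using h upos assms by (auto simp: S_def)
    then have "zz d x (u(a := (u a)(b := u a b + h))) a' > 0" using zz_pos[of d "u(a := (u a)(b := u a b + h))" a' x m0] xnn m0 by blast
    then show ?thesis using assms by (simp add: pduF zz_upd Z_def)
  qed
  show ?thesis
  proof (cases "a = a'")
    case True
    have "deriv (\<lambda>h. pdu (fnet n1 d alpha x r) a' b'' w (u(a := (u a)(b := u a b + h)))) 0
        = (w r a' * alpha a' * x b'') * ((alpha a' - 1) * Z powr (alpha a' - 1 - 1) * x b)"
      by (rule deriv_on_open[OF S, where f = "\<lambda>h. (w r a' * alpha a' * x b'') * (Z + h * x b) powr (alpha a' - 1) + 0"])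
         (use eq True in simp, rule has_deriv_aff_powr[OF Zp])
    then show ?thesis using True by (simp add: pdu_def[of "pdu (fnet n1 d alpha x r) a' b''"] Z_def)
  next
    case False
    have "deriv (\<lambda>h. pdu (fnet n1 d alpha x r) a' b'' w (u(a := (u a)(b := u a b + h)))) 0 = 0"
      by (rule deriv_on_open[OF S, where f = "\<lambda>h. w r a' * (alpha a' * Z powr (alpha a' - 1) * x b'')"])
         (use eq False in simp, rule DERIV_const)
    then show ?thesis using False by (simp add: pdu_def[of "pdu (fnet n1 d alpha x r) a' b''"])
  qed
qed




lemma pdw0: "pdw (\<lambda>_ _. 0) s t = (\<lambda>_ _. 0)"
  by (intro ext) (simp add: pdw_def deriv_const0)

lemma pdu0: "pdu (\<lambda>_ _. 0) s t = (\<lambda>_ _. 0)"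
  by (intro ext) (simp add: pdu_def deriv_const0)

lemma Psi_nonneg: "Psi n1 alpha p q delta t \<ge> 0"
  by (simp add: Psi_def Let_def)

lemma powr_m1_mult: "(Z::real) > 0 \<Longrightarrow> Z powr (e - 1) * Z = Z powr e"
  using powr_add[of Z "e - 1" 1] by simp

lemma sum_u_x: "(\<Sum>b<d. u a b * (c * x b)) = c * zz d x u a"
  by (simp add: zz_def sum_distrib_left algebra_simps)

lemma sum_delta_outer:
  fixes u :: "nat \<Rightarrow> nat \<Rightarrow> real"
  assumes "a0 < n1"
  shows "(\<Sum>a<n1. \<Sum>b<d. u a b * (if P \<and> a = a0 then g b else 0))
       = (if P then (\<Sum>b<d. u a0 b * g b) else 0)"
proof -
  have "(\<Sum>a<n1. \<Sum>b<d. u a b * (if P \<and> a = a0 then g b else 0))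
      = (\<Sum>a<n1. if a = a0 then (if P then (\<Sum>b<d. u a0 b * g b) else 0) else 0)"
    by (rule sum.cong) (auto intro: sum.neutral)
  also have "\<dots> = (if P then (\<Sum>b<d. u a0 b * g b) else 0)"
    using assms by (simp add: sum.delta)
  finally show ?thesis .
qed

theorem mainTheorem11:
  fixes K n1 d n :: nat
    and X :: "nat \<Rightarrow> nat \<Rightarrow> real"
    and alpha :: "nat \<Rightarrow> real"
    and pw pu rhow rhou :: real
    and w u :: "nat \<Rightarrow> nat \<Rightarrow> real"
    and i r s q b' a' b'' :: nat
  assumes "pw > 1" and "pu > 1" and "rhow > 0" and "rhou > 0"
    and "\<forall>j<n. \<forall>m<d. X j m \<ge> 0"
    and "\<forall>l<n1. alpha l \<ge> 1"
    and "i < n"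
    and "(w, u) \<in> Bpp K n1 d pw pu rhow rhou"
    and "r < K" and "s < K" and "q < K"
    and "b' < n1" and "a' < n1" and "b'' < d"
  defines "rhox \<equiv> Max ((\<lambda>j. lpnorm d (conj_exp pu) (X j)) ` {..<n})"
    and "F \<equiv> fnet n1 d alpha (X i) r"
    and "alpha_inf \<equiv> Max ((\<lambda>l. \<bar>alpha l\<bar>) ` {..<n1})"
  shows "(\<Sum>t<n1. w s t * pdw F s t w u)
           \<le> rhow * Psi n1 alpha (conj_exp pw) pu (\<lambda>_. 1) (rhou * rhox)
     \<and> (\<Sum>a<n1. \<Sum>b<d. u a b * pdu F a b w u)
           \<le> rhow * Psi n1 alpha (conj_exp pw) pu alpha (rhou * rhox)
     \<and> (\<Sum>t<n1. w s t * pdw (pdw F q b') s t w u) = 0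
     \<and> (\<Sum>a<n1. \<Sum>b<d. u a b * pdu (pdw F q b') a b w u) \<le> alpha_inf * pdw F q b' w u
     \<and> (\<Sum>t<n1. w s t * pdw (pdu F a' b'') s t w u) \<le> pdu F a' b'' w u
     \<and> (\<Sum>a<n1. \<Sum>b<d. u a b * pdu (pdu F a' b'') a b w u)
           \<le> (alpha_inf - 1) * pdu F a' b'' w u"
proof -
  define x where "x = X i"
  have xnn: "\<And>m. m < d \<Longrightarrow> x m \<ge> 0" using assms(5,7) by (simp add: x_def)
  have wpos: "\<And>l. l < n1 \<Longrightarrow> w r l > 0" and wnorm: "lpnorm n1 pw (w r) \<le> rhow"
    and upos: "\<And>l m. l < n1 \<Longrightarrow> m < d \<Longrightarrow> u l m > 0" and unorm: "lpnorm_mat n1 d pu u \<le> rhou"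
    using assms(8,9) by (auto simp: Bpp_def)
  have xnorm: "lpnorm d (conj_exp pu) x \<le> rhox"
    unfolding rhox_def x_def using assms(7) by (intro Max_ge) auto
  have rhox0: "rhox \<ge> 0"
    using xnorm by (smt (verit) lpnorm_def powr_ge_zero)
  have al: "\<And>l. l < n1 \<Longrightarrow> alpha l \<ge> 1" using assms(6) by simp
  have alinf: "\<And>l. l < n1 \<Longrightarrow> alpha l \<le> alpha_inf"
  proof -
    fix l assume l: "l < n1"
    have "\<bar>alpha l\<bar> \<le> alpha_inf" unfolding alpha_inf_def using l by (intro Max_ge) auto
    then show "alpha l \<le> alpha_inf" by simp
  qed
  have Fx: "F = fnet n1 d alpha x r" by (simp add: F_def x_def)
  show ?thesis
  proof (cases "\<exists>m0<d. x m0 > 0")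
    case False
    then have x0: "\<And>m. m < d \<Longrightarrow> x m = 0" using xnn by force
    have F0: "F = (\<lambda>_ _. 0)"
    proof (intro ext)
      fix w' u' :: "nat \<Rightarrow> nat \<Rightarrow> real"
      show "F w' u' = 0" unfolding Fx fnet_def using x0 by simp
    qed
    have b: "alpha_inf * 0 \<le> 0" "(alpha_inf - 1) * 0 \<le> (0::real)" by simp_all
    show ?thesis using assms(3) Psi_nonneg unfolding F0 pdw0 pdu0 by simp
  next
    case True
    then obtain m0 where m0: "m0 < d" "x m0 > 0" by auto
    define Z where "Z l = zz d x u l" for l
    have Zp: "\<And>l. l < n1 \<Longrightarrow> Z l > 0"
      unfolding Z_def using zz_pos[of d u _ x m0] upos xnn m0 by blast
    have c1: "(\<Sum>t<n1. w s t * pdw F s t w u) \<le> rhow * Psi n1 alpha (conj_exp pw) pu (\<lambda>_. 1) (rhou * rhox)"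
    proof (cases "s = r")
      case True
      have "(\<Sum>t<n1. w s t * pdw F s t w u) = (\<Sum>l<n1. w r l * ((\<lambda>_. 1) l * zz d x u l powr alpha l))"
        using True unfolding Fx by (intro sum.cong) (auto simp: pdwF)
      also have "\<dots> \<le> rhow * Psi n1 alpha (conj_exp pw) pu (\<lambda>_. 1) (rhou * rhox)"
        by (rule main_bound[where pw=pw and q=pu and rhou=rhou and rhox=rhox and w=w and r=r and rhow=rhow and u=u and x=x])
           (use assms(1,2,4) rhox0 wpos wnorm upos unorm xnn xnorm in \<open>auto simp: al\<close>)
      finally show ?thesis .
    next
      case False
      have "(\<Sum>t<n1. w s t * pdw F s t w u) = 0"
        using False unfolding Fx by (intro sum.neutral) (auto simp: pdwF)
      then show ?thesis using assms(3) Psi_nonneg by simp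
    qed
    have c2: "(\<Sum>a<n1. \<Sum>b<d. u a b * pdu F a b w u) \<le> rhow * Psi n1 alpha (conj_exp pw) pu alpha (rhou * rhox)"
    proof -
      have "(\<Sum>a<n1. \<Sum>b<d. u a b * pdu F a b w u) = (\<Sum>l<n1. w r l * (alpha l * zz d x u l powr alpha l))"
      proof (rule sum.cong)
        fix a assume a: "a \<in> {..<n1}"
        have "(\<Sum>b<d. u a b * pdu F a b w u) = (\<Sum>b<d. u a b * ((w r a * alpha a * Z a powr (alpha a - 1)) * x b))"
          using a Zp unfolding Fx by (intro sum.cong) (auto simp: pduF Z_def mult.assoc)
        also have "\<dots> = w r a * alpha a * (Z a powr (alpha a - 1) * Z a)"
          by (subst sum_u_x) (simp add: Z_def mult.assoc)
        also have "\<dots> = w r a * (alpha a * zz d x u a powr alpha a)"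
          using Zp a by (simp add: powr_m1_mult Z_def)
        finally show "(\<Sum>b<d. u a b * pdu F a b w u) = w r a * (alpha a * zz d x u a powr alpha a)" .
      qed simp
      also have "\<dots> \<le> rhow * Psi n1 alpha (conj_exp pw) pu alpha (rhou * rhox)"
        by (rule main_bound[where pw=pw and q=pu and rhou=rhou and rhox=rhox and w=w and r=r and rhow=rhow and u=u and x=x])
           (use assms(1,2,4) rhox0 wpos wnorm upos unorm xnn xnorm in \<open>auto simp: al intro: less_le_trans[OF zero_less_one al]\<close>)
      finally show ?thesis .
    qed
    have c3: "(\<Sum>t<n1. w s t * pdw (pdw F q b') s t w u) = 0"
      unfolding Fx using assms(12) by (intro sum.neutral) (auto simp: pdw_pdwF)
    have c4: "(\<Sum>a<n1. \<Sum>b<d. u a b * pdu (pdw F q b') a b w u) \<le> alpha_inf * pdw F q b' w u"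
    proof -
      have "(\<Sum>a<n1. \<Sum>b<d. u a b * pdu (pdw F q b') a b w u)
          = (\<Sum>a<n1. \<Sum>b<d. u a b * (if q = r \<and> a = b' then (alpha b' * Z b' powr (alpha b' - 1)) * x b else 0))"
        unfolding Fx using assms(12) Zp by (intro sum.cong refl) (auto simp: pdu_pdwF Z_def)
      also have "\<dots> = (if q = r then alpha b' * (Z b' powr (alpha b' - 1) * Z b') else 0)"
        by (simp only: sum_delta_outer[OF assms(12)] sum_u_x) (simp add: Z_def mult.assoc)
      also have "\<dots> = (if q = r then alpha b' * Z b' powr alpha b' else 0)"
        using Zp assms(12) by (simp add: powr_m1_mult)
      also have "\<dots> \<le> alpha_inf * (if q = r then Z b' powr alpha b' else 0)"
        using alinf[OF assms(12)] by (auto intro: mult_right_mono)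
      also have "\<dots> = alpha_inf * pdw F q b' w u"
        unfolding Fx using assms(12) by (simp add: pdwF Z_def)
      finally show ?thesis .
    qed
    define Kc where "Kc = alpha a' * Z a' powr (alpha a' - 1) * x b''"
    have Kc0: "Kc \<ge> 0" unfolding Kc_def using al[OF assms(13)] xnn[OF assms(14)] by simp
    have pdu_eq: "pdu F a' b'' w u = w r a' * Kc"
      unfolding Fx Kc_def Z_def using assms(13,14) Zp by (simp add: pduF Z_def)
    have pdu_nn: "pdu F a' b'' w u \<ge> 0" using pdu_eq Kc0 wpos[OF assms(13)] by simp
    have c5: "(\<Sum>t<n1. w s t * pdw (pdu F a' b'') s t w u) \<le> pdu F a' b'' w u"
    proof -
      have "(\<Sum>t<n1. w s t * pdw (pdu F a' b'') s t w u) = (\<Sum>t<n1. w s t * (if s = r \<and> t = a' then Kc else 0))"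
        unfolding Fx Kc_def using assms(13,14) Zp by (intro sum.cong refl) (auto simp: pdw_pduF Z_def)
      also have "\<dots> = (\<Sum>t<n1. if t = a' then (if s = r then w r a' * Kc else 0) else 0)"
        by (intro sum.cong refl) auto
      also have "\<dots> = (if s = r then w r a' * Kc else 0)"
        using assms(13) by (simp add: sum.delta)
      also have "\<dots> \<le> pdu F a' b'' w u" using pdu_eq pdu_nn by simp
      finally show ?thesis .
    qed
    have c6: "(\<Sum>a<n1. \<Sum>b<d. u a b * pdu (pdu F a' b'') a b w u) \<le> (alpha_inf - 1) * pdu F a' b'' w u"
    proof -
      have "(\<Sum>a<n1. \<Sum>b<d. u a b * pdu (pdu F a' b'') a b w u)
          = (\<Sum>a<n1. \<Sum>b<d. u a b * (if True \<and> a = a' then (w r a' * alpha a' * x b'' * (alpha a' - 1) * Z a' powr (alpha a' - 1 - 1)) * x b else 0))"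
      proof (intro sum.cong refl)
        fix a b assume ab: "a \<in> {..<n1}" "b \<in> {..<d}"
        have "pdu (pdu F a' b'') a b w u = (if a = a' then w r a' * alpha a' * x b'' * ((alpha a' - 1) * zz d x u a' powr (alpha a' - 1 - 1) * x b) else 0)"
          unfolding Fx by (rule pdu_pduF) (use ab assms(13,14) upos xnn m0 in auto)
        then show "u a b * pdu (pdu F a' b'') a b w u = u a b * (if True \<and> a = a' then (w r a' * alpha a' * x b'' * (alpha a' - 1) * Z a' powr (alpha a' - 1 - 1)) * x b else 0)"
          by (simp add: Z_def mult.assoc)
      qed
      also have "\<dots> = w r a' * alpha a' * x b'' * (alpha a' - 1) * (Z a' powr (alpha a' - 1 - 1) * Z a')"
        by (subst sum_delta_outer[OF assms(13)], simp only: if_True, subst sum_u_x, simp add: Z_def mult.assoc)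
      also have "\<dots> = (alpha a' - 1) * pdu F a' b'' w u"
        using powr_m1_mult[OF Zp[OF assms(13)], of "alpha a' - 1"] by (simp add: pdu_eq Kc_def)
      also have "\<dots> \<le> (alpha_inf - 1) * pdu F a' b'' w u"
        using alinf[OF assms(13)] pdu_nn by (intro mult_right_mono) auto
      finally show ?thesis .
    qed
    show ?thesis using c1 c2 c3 c4 c5 c6 by blast
  qed
qed


end
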